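(* Let $\mu$ be a probability measure on a measurable space $(E,\mathcal F)$ and let $(\mathcal E,\mathcal D(\mathcal E))$ be a non-conservative irreducible symmetric Dirichlet form on $L^2(\mu)$. Then there is $C>0$ such that $$\mu(f^2)\le C\,\mathcal E(f,f),\qquad f\in\mathcal D(\mathcal E),$$ if and only if there are $C_1,C_2>0$ such that $$\mu(f^2)\le C_1\,\mathcal E(f,f)+C_2\,\mu(|f|)^2,\qquad f\in\mathcal D(\mathcal E).$$
   Context: Non-conservative means either $1\notin\mathcal D(\mathcal E)$, or $1\in\mathcal D(\mathcal E)$ but $\mathcal E(1,1)>0$. In this setting, irreducible means that $f\in\mathcal D(\mathcal E)$ with $\mathcal E(f,f)=0$ implies $f=0$. *)

theory Defs
  imports "HOL-Probability.Probability"
begin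

text \<open>Elements of L^2(mu) are represented by Borel measurable, square integrable
  representatives; the domain of a form is required to be closed under
  a.e. modification, and the form is required to be insensitive to it.\<close>

definition sq_int :: "'a measure \<Rightarrow> ('a \<Rightarrow> real) \<Rightarrow> bool" where
  "sq_int M f \<longleftrightarrow> f \<in> borel_measurable M \<and> integrable M (\<lambda>x. (f x)\<^sup>2)"

definition E1 :: "'a measure \<Rightarrow> (('a \<Rightarrow> real) \<Rightarrow> ('a \<Rightarrow> real) \<Rightarrow> real) \<Rightarrow> ('a \<Rightarrow> real) \<Rightarrow> real" where
  "E1 M E g = E g g + (\<integral>x. (g x)\<^sup>2 \<partial>M)"

definition symmetric_dirichlet_form ::
  "'a measure \<Rightarrow> ('a \<Rightarrow> real) set \<Rightarrow> (('a \<Rightarrow> real) \<Rightarrow> ('a \<Rightarrow> real) \<Rightarrow> real) \<Rightarrow> bool" where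
  "symmetric_dirichlet_form M D E \<longleftrightarrow>
     \<comment> \<open>domain consists of L^2 elements, well defined on a.e.-classes\<close>
     (\<forall>f\<in>D. sq_int M f) \<and>
     (\<forall>f\<in>D. \<forall>g. g \<in> borel_measurable M \<and> (AE x in M. f x = g x) \<longrightarrow>
         g \<in> D \<and> (\<forall>h\<in>D. E g h = E f h)) \<and>
     \<comment> \<open>linear subspace\<close>
     (\<lambda>x. 0) \<in> D \<and>
     (\<forall>f\<in>D. \<forall>g\<in>D. (\<lambda>x. f x + g x) \<in> D) \<and>
     (\<forall>f\<in>D. \<forall>c. (\<lambda>x. c * f x) \<in> D) \<and>
     \<comment> \<open>dense in L^2\<close>
     (\<forall>f. sq_int M f \<longrightarrow> (\<forall>e>0. \<exists>g\<in>D. (\<integral>x. (f x - g x)\<^sup>2 \<partial>M) < e)) \<and>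
     \<comment> \<open>symmetric nonnegative definite bilinear form\<close>
     (\<forall>f\<in>D. \<forall>g\<in>D. \<forall>h\<in>D. E (\<lambda>x. f x + g x) h = E f h + E g h) \<and>
     (\<forall>f\<in>D. \<forall>h\<in>D. \<forall>c. E (\<lambda>x. c * f x) h = c * E f h) \<and>
     (\<forall>f\<in>D. \<forall>g\<in>D. E f g = E g f) \<and>
     (\<forall>f\<in>D. E f f \<ge> 0) \<and>
     \<comment> \<open>closed: D is complete w.r.t. the E_1 norm\<close>
     (\<forall>u::nat \<Rightarrow> 'a \<Rightarrow> real. (\<forall>n. u n \<in> D) \<and>
        (\<forall>e>0. \<exists>N. \<forall>m\<ge>N. \<forall>n\<ge>N. E1 M E (\<lambda>x. u m x - u n x) < e) \<longrightarrow>
        (\<exists>f\<in>D. (\<lambda>n. E1 M E (\<lambda>x. u n x - f x)) \<longlonglongrightarrow> 0)) \<and>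
     \<comment> \<open>Markov property (unit contraction)\<close>
     (\<forall>f\<in>D. (\<lambda>x. min 1 (max 0 (f x))) \<in> D \<and>
        E (\<lambda>x. min 1 (max 0 (f x))) (\<lambda>x. min 1 (max 0 (f x))) \<le> E f f)"

definition non_conservative ::
  "'a measure \<Rightarrow> ('a \<Rightarrow> real) set \<Rightarrow> (('a \<Rightarrow> real) \<Rightarrow> ('a \<Rightarrow> real) \<Rightarrow> real) \<Rightarrow> bool" where
  "non_conservative M D E \<longleftrightarrow> (\<lambda>x. 1) \<notin> D \<or> ((\<lambda>x. 1) \<in> D \<and> E (\<lambda>x. 1) (\<lambda>x. 1) > 0)"

definition irreducible_form ::
  "'a measure \<Rightarrow> ('a \<Rightarrow> real) set \<Rightarrow> (('a \<Rightarrow> real) \<Rightarrow> ('a \<Rightarrow> real) \<Rightarrow> real) \<Rightarrow> bool" where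
  "irreducible_form M D E \<longleftrightarrow> (\<forall>f\<in>D. E f f = 0 \<longrightarrow> (AE x in M. f x = 0))"

end

theory Submission
  imports Defs
begin

lemma sdf_conj:
  assumes "symmetric_dirichlet_form M D E"
  shows "(\<forall>f\<in>D. sq_int M f)"
    "(\<forall>f\<in>D. \<forall>g. g \<in> borel_measurable M \<and> (AE x in M. f x = g x) \<longrightarrow>
         g \<in> D \<and> (\<forall>h\<in>D. E g h = E f h))"
    "(\<forall>f\<in>D. \<forall>g\<in>D. (\<lambda>x. f x + g x) \<in> D)"
    "(\<forall>f\<in>D. \<forall>c. (\<lambda>x. c * f x) \<in> D)"
    "(\<forall>f\<in>D. \<forall>g\<in>D. \<forall>h\<in>D. E (\<lambda>x. f x + g x) h = E f h + E g h)"
    "(\<forall>f\<in>D. \<forall>h\<in>D. \<forall>c. E (\<lambda>x. c * f x) h = c * E f h)"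
    "(\<forall>f\<in>D. \<forall>g\<in>D. E f g = E g f)"
    "(\<forall>f\<in>D. E f f \<ge> 0)"
    "(\<forall>u::nat \<Rightarrow> 'a \<Rightarrow> real. (\<forall>n. u n \<in> D) \<and>
        (\<forall>e>0. \<exists>N. \<forall>m\<ge>N. \<forall>n\<ge>N. E1 M E (\<lambda>x. u m x - u n x) < e) \<longrightarrow>
        (\<exists>f\<in>D. (\<lambda>n. E1 M E (\<lambda>x. u n x - f x)) \<longlonglongrightarrow> 0))"
    "(\<forall>f\<in>D. (\<lambda>x. min 1 (max 0 (f x))) \<in> D \<and>
        E (\<lambda>x. min 1 (max 0 (f x))) (\<lambda>x. min 1 (max 0 (f x))) \<le> E f f)"
  using assms unfolding symmetric_dirichlet_form_def apply -
  apply (elim conjE, assumption)+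
  done

lemma sdf_sq: "symmetric_dirichlet_form M D E \<Longrightarrow> f \<in> D \<Longrightarrow> sq_int M f"
  using sdf_conj(1) by blast
lemma sdf_ae: "symmetric_dirichlet_form M D E \<Longrightarrow> f \<in> D \<Longrightarrow> g \<in> borel_measurable M \<Longrightarrow> (AE x in M. f x = g x) \<Longrightarrow> g \<in> D"
  using sdf_conj(2) by blast
lemma sdf_add: "symmetric_dirichlet_form M D E \<Longrightarrow> f \<in> D \<Longrightarrow> g \<in> D \<Longrightarrow> (\<lambda>x. f x + g x) \<in> D"
  using sdf_conj(3) by blast
lemma sdf_scale: "symmetric_dirichlet_form M D E \<Longrightarrow> f \<in> D \<Longrightarrow> (\<lambda>x. c * f x) \<in> D"
  using sdf_conj(4) by blast
lemma sdf_Eadd: "symmetric_dirichlet_form M D E \<Longrightarrow> f \<in> D \<Longrightarrow> g \<in> D \<Longrightarrow> h \<in> D \<Longrightarrow> E (\<lambda>x. f x + g x) h = E f h + E g h"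
  using sdf_conj(5) by blast
lemma sdf_Escale: "symmetric_dirichlet_form M D E \<Longrightarrow> f \<in> D \<Longrightarrow> h \<in> D \<Longrightarrow> E (\<lambda>x. c * f x) h = c * E f h"
  using sdf_conj(6) by blast
lemma sdf_sym: "symmetric_dirichlet_form M D E \<Longrightarrow> f \<in> D \<Longrightarrow> g \<in> D \<Longrightarrow> E f g = E g f"
  using sdf_conj(7) by blast
lemma sdf_nonneg: "symmetric_dirichlet_form M D E \<Longrightarrow> f \<in> D \<Longrightarrow> E f f \<ge> 0"
  using sdf_conj(8) by blast
lemma sdf_closed: "symmetric_dirichlet_form M D E \<Longrightarrow> (\<forall>n. u n \<in> D) \<Longrightarrow>
        (\<forall>e>0. \<exists>N. \<forall>m\<ge>N. \<forall>n\<ge>N. E1 M E (\<lambda>x. u m x - u n x) < e) \<Longrightarrow>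
        (\<exists>f\<in>D. (\<lambda>n. E1 M E (\<lambda>x. u n x - f x)) \<longlonglongrightarrow> 0)"
  using sdf_conj(9) by blast
lemma sdf_markov: "symmetric_dirichlet_form M D E \<Longrightarrow> f \<in> D \<Longrightarrow> (\<lambda>x. min 1 (max 0 (f x))) \<in> D \<and>
        E (\<lambda>x. min 1 (max 0 (f x))) (\<lambda>x. min 1 (max 0 (f x))) \<le> E f f"
  using sdf_conj(10) by blast

lemma sdf_lin:
  assumes "symmetric_dirichlet_form M D E" "a \<in> D" "b \<in> D"
  shows "(\<lambda>x. p * a x + q * b x) \<in> D"
  using assms by (intro sdf_add sdf_scale) auto

lemma sdf_Q:
  assumes S: "symmetric_dirichlet_form M D E" and a: "a \<in> D" and b: "b \<in> D"
  shows "E (\<lambda>x. p * a x + q * b x) (\<lambda>x. p * a x + q * b x)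
         = p\<^sup>2 * E a a + 2 * p * q * E a b + q\<^sup>2 * E b b"
proof -
  let ?A = "\<lambda>x. p * a x" and ?B = "\<lambda>x. q * b x" and ?S = "\<lambda>x. p * a x + q * b x"
  have A: "?A \<in> D" and B: "?B \<in> D" using a b sdf_scale[OF S] by auto
  have SD: "?S \<in> D" using sdf_lin[OF S a b] .
  have "E ?S ?S = E ?A ?S + E ?B ?S" using sdf_Eadd[OF S A B SD] by simp
  also have "E ?A ?S = p * E a ?S" using sdf_Escale[OF S a SD] .
  also have "E a ?S = E ?S a" using sdf_sym[OF S a SD] .
  also have "E ?S a = E ?A a + E ?B a" using sdf_Eadd[OF S A B a] by simp
  also have "E ?B ?S = q * E b ?S" using sdf_Escale[OF S b SD] .
  also have "E b ?S = E ?S b" using sdf_sym[OF S b SD] .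
  also have "E ?S b = E ?A b + E ?B b" using sdf_Eadd[OF S A B b] by simp
  finally have X: "E ?S ?S = p * (E ?A a + E ?B a) + q * (E ?A b + E ?B b)" .
  have ba: "E b a = E a b" using sdf_sym[OF S b a] .
  show ?thesis
    unfolding X sdf_Escale[OF S a a] sdf_Escale[OF S b a] sdf_Escale[OF S a b] sdf_Escale[OF S b b] ba
    by (simp add: power2_eq_square algebra_simps)
qed

lemma sdf_Ediff:
  assumes S: "symmetric_dirichlet_form M D E" and a: "a \<in> D" and b: "b \<in> D"
  shows "E (\<lambda>x. a x - b x) (\<lambda>x. a x - b x) = E a a - 2 * E a b + E b b"
    and "(\<lambda>x. a x - b x) \<in> D"
proof -
  have eq: "(\<lambda>x. a x - b x) = (\<lambda>x. 1 * a x + (-1) * b x)" by simp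
  show "E (\<lambda>x. a x - b x) (\<lambda>x. a x - b x) = E a a - 2 * E a b + E b b"
    unfolding eq sdf_Q[OF S a b] by simp
  show "(\<lambda>x. a x - b x) \<in> D" unfolding eq by (rule sdf_lin[OF S a b])
qed

lemma sdf_cs:
  assumes S: "symmetric_dirichlet_form M D E" and a: "a \<in> D" and b: "b \<in> D"
  shows "2 * E a b \<le> E a a + E b b"
  using sdf_Ediff[OF S a b] sdf_nonneg[OF S, of "\<lambda>x. a x - b x"] by simp

lemma sdf_cs2:
  assumes S: "symmetric_dirichlet_form M D E" and a: "a \<in> D" and b: "b \<in> D"
  shows "- 2 * E a b \<le> E a a + E b b"
proof -
  have "(\<lambda>x. a x + b x) \<in> D" using sdf_add[OF S a b] .
  then show ?thesis using sdf_nonneg[OF S, of "\<lambda>x. a x + b x"] sdf_Q[OF S a b, of 1 1] by simp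
qed

lemma sdf_Ediff_le:
  assumes S: "symmetric_dirichlet_form M D E" and a: "a \<in> D" and b: "b \<in> D"
  shows "E (\<lambda>x. a x - b x) (\<lambda>x. a x - b x) \<le> 2 * E a a + 2 * E b b"
  using sdf_Ediff[OF S a b] sdf_cs2[OF S a b] by simp

lemma sdf_Emid:
  assumes S: "symmetric_dirichlet_form M D E" and a: "a \<in> D" and b: "b \<in> D"
  shows "E (\<lambda>x. (1/2) * a x + (1/2) * b x) (\<lambda>x. (1/2) * a x + (1/2) * b x) \<le> (E a a + E b b) / 2"
  using sdf_Q[OF S a b, of "1/2" "1/2"] sdf_cs[OF S a b] by (simp add: power2_eq_square)

lemma sdf_Escale2:
  assumes S: "symmetric_dirichlet_form M D E" and a: "a \<in> D"
  shows "E (\<lambda>x. c * a x) (\<lambda>x. c * a x) = c\<^sup>2 * E a a"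
  using sdf_Q[OF S a a, of c 0] by simp


lemma sq_int_integrable:
  assumes P: "prob_space M" and f: "sq_int M f"
  shows "integrable M f"
proof -
  interpret prob_space M by (rule P)
  have m: "f \<in> borel_measurable M" and i: "integrable M (\<lambda>x. (f x)\<^sup>2)"
    using f unfolding sq_int_def by blast+
  show ?thesis by (rule square_integrable_imp_integrable[OF m i])
qed

lemma sq_int_cs:
  assumes P: "prob_space M" and f: "sq_int M f"
  shows "(\<integral>x. f x \<partial>M)\<^sup>2 \<le> (\<integral>x. (f x)\<^sup>2 \<partial>M)"
proof -
  interpret prob_space M by (rule P)
  have i: "integrable M f" using sq_int_integrable[OF P f] .
  have i2: "integrable M (\<lambda>x. (f x)\<^sup>2)" using f unfolding sq_int_def by auto
  have "0 \<le> variance f" by (rule Bochner_Integration.integral_nonneg) simp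
  also have "variance f = (\<integral>x. (f x)\<^sup>2 \<partial>M) - (\<integral>x. f x \<partial>M)\<^sup>2"
    using variance_eq[OF i i2] .
  finally show ?thesis by simp
qed

lemma trunc_pointwise:
  fixes y :: real
  shows "max 0 y - y\<^sup>2 \<le> min 1 (max 0 y)"
proof (cases "y \<le> 1")
  case True
  then show ?thesis by (simp add: max_def min_def)
next
  case False
  then have "y \<le> y\<^sup>2" by (simp add: power2_eq_square)
  then show ?thesis using False by (simp add: max_def min_def)
qed

lemma trunc:
  assumes P: "prob_space M" and S: "symmetric_dirichlet_form M D E" and g: "g \<in> D"
    and a: "a > 0" and pos: "a \<le> (\<integral>x. max 0 (g x) \<partial>M)" and sq: "(\<integral>x. (g x)\<^sup>2 \<partial>M) \<le> 1"
  shows "\<exists>u\<in>D. E u u \<le> (a/2)\<^sup>2 * E g g \<and> a\<^sup>2/4 \<le> (\<integral>x. u x \<partial>M) \<and> (\<integral>x. (u x)\<^sup>2 \<partial>M) \<le> 1"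
proof -
  interpret prob_space M by (rule P)
  define s where "s = a/2"
  have s: "s > 0" using a s_def by simp
  define u where "u = (\<lambda>x. min 1 (max 0 ((\<lambda>x. s * g x) x)))"
  have sg: "(\<lambda>x. s * g x) \<in> D" using sdf_scale[OF S g] .
  have uD: "u \<in> D" and uE: "E u u \<le> E (\<lambda>x. s * g x) (\<lambda>x. s * g x)"
    using sdf_markov[OF S sg] unfolding u_def by auto
  have uE2: "E u u \<le> s\<^sup>2 * E g g" using uE sdf_Escale2[OF S g, of s] by simp
  have gsq: "sq_int M g" using sdf_sq[OF S g] .
  have gm[measurable]: "g \<in> borel_measurable M" using gsq unfolding sq_int_def by blast
  have gi: "integrable M g" using sq_int_integrable[OF P gsq] .
  have gi2: "integrable M (\<lambda>x. (g x)\<^sup>2)" using gsq unfolding sq_int_def by blast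
  have usq: "sq_int M u" using sdf_sq[OF S uD] .
  have ui: "integrable M u" using sq_int_integrable[OF P usq] .
  have ui2: "integrable M (\<lambda>x. (u x)\<^sup>2)" using usq unfolding sq_int_def by blast
  have gpi: "integrable M (\<lambda>x. max 0 (g x))"
    using integrable_max[OF integrable_zero gi] by simp
  have pw: "s * max 0 (g x) - s\<^sup>2 * (g x)\<^sup>2 \<le> u x" for x
  proof -
    have "max 0 (s * g x) - (s * g x)\<^sup>2 \<le> u x" unfolding u_def using trunc_pointwise by simp
    moreover have "max 0 (s * g x) = s * max 0 (g x)" using s by (simp add: max_mult_distrib_left)
    ultimately show ?thesis by (simp add: power_mult_distrib)
  qed
  have "(\<integral>x. s * max 0 (g x) - s\<^sup>2 * (g x)\<^sup>2 \<partial>M) \<le> (\<integral>x. u x \<partial>M)"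
    by (rule integral_mono) (use gpi gi2 ui pw in auto)
  moreover have "(\<integral>x. s * max 0 (g x) - s\<^sup>2 * (g x)\<^sup>2 \<partial>M)
      = s * (\<integral>x. max 0 (g x) \<partial>M) - s\<^sup>2 * (\<integral>x. (g x)\<^sup>2 \<partial>M)"
    using gpi gi2 by simp
  moreover have "s * a - s\<^sup>2 * 1 \<le> s * (\<integral>x. max 0 (g x) \<partial>M) - s\<^sup>2 * (\<integral>x. (g x)\<^sup>2 \<partial>M)"
    using pos sq s by (intro diff_mono mult_left_mono) auto
  moreover have "s * a - s\<^sup>2 * 1 = a\<^sup>2/4" unfolding s_def by (simp add: power2_eq_square)
  ultimately have uint: "a\<^sup>2/4 \<le> (\<integral>x. u x \<partial>M)" by linarith
  have "(\<integral>x. (u x)\<^sup>2 \<partial>M) \<le> (\<integral>x. 1 \<partial>M)"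
  proof (rule integral_mono[OF ui2])
    show "integrable M (\<lambda>x. 1::real)" by simp
    fix x
    have "0 \<le> u x" "u x \<le> 1" unfolding u_def by auto
    then show "(u x)\<^sup>2 \<le> 1" by (simp add: power_le_one)
  qed
  also have "(\<integral>x. 1 \<partial>M) = (1::real)" by (simp add: prob_space)
  finally have "(\<integral>x. (u x)\<^sup>2 \<partial>M) \<le> 1" .
  then show ?thesis using uD uE2 uint unfolding s_def by blast
qed

lemma step1:
  assumes P: "prob_space M" and S: "symmetric_dirichlet_form M D E"
    and C1: "C1 > 0" and C2: "C2 > 0"
    and def: "\<forall>f\<in>D. (\<integral>x. (f x)\<^sup>2 \<partial>M) \<le> C1 * E f f + C2 * (\<integral>x. \<bar>f x\<bar> \<partial>M)\<^sup>2"
    and np: "\<not> (\<exists>C>0. \<forall>f\<in>D. (\<integral>x. (f x)\<^sup>2 \<partial>M) \<le> C * E f f)"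
  shows "\<exists>\<delta>>0. \<forall>\<epsilon>>0. \<exists>u\<in>D. E u u \<le> \<epsilon> \<and> \<delta> \<le> (\<integral>x. u x \<partial>M) \<and> (\<integral>x. (u x)\<^sup>2 \<partial>M) \<le> 1"
proof -
  interpret prob_space M by (rule P)
  define a0 where "a0 = sqrt (1 / (2 * C2))"
  define a where "a = a0 / 2"
  have a0: "a0 > 0" unfolding a0_def using C2 by simp
  have a: "a > 0" unfolding a_def using a0 by simp
  have "\<forall>\<epsilon>>0. \<exists>u\<in>D. E u u \<le> \<epsilon> \<and> a\<^sup>2/4 \<le> (\<integral>x. u x \<partial>M) \<and> (\<integral>x. (u x)\<^sup>2 \<partial>M) \<le> 1"
  proof (intro allI impI)
    fix \<epsilon> :: real assume eps: "\<epsilon> > 0"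
    define C where "C = max (2 * C1) ((a/2)\<^sup>2 / \<epsilon>) + 1"
    have Cpos: "C > 0" unfolding C_def using C1 by (simp add: max_def)
    have C2C1: "2 * C1 < C" unfolding C_def by simp
    have Ceps: "(a/2)\<^sup>2 / \<epsilon> < C" unfolding C_def by simp
    obtain f where fD: "f \<in> D" and fbig: "C * E f f < (\<integral>x. (f x)\<^sup>2 \<partial>M)"
      using np Cpos by (meson not_le)
    define v where "v = (\<integral>x. (f x)\<^sup>2 \<partial>M)"
    have Ef0: "E f f \<ge> 0" using sdf_nonneg[OF S fD] .
    have v: "v > 0" unfolding v_def using fbig Ef0 Cpos
      by (smt (verit) mult_nonneg_nonneg)
    define c where "c = 1 / sqrt v"
    define g where "g = (\<lambda>x. c * f x)"
    have gD: "g \<in> D" unfolding g_def using sdf_scale[OF S fD] .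
    have c2: "c\<^sup>2 = 1 / v" unfolding c_def using v by (simp add: power_divide)
    have g2: "(\<integral>x. (g x)\<^sup>2 \<partial>M) = 1"
      unfolding g_def power_mult_distrib using v by (simp add: c2 v_def)
    have Eg: "E g g = E f f / v" unfolding g_def sdf_Escale2[OF S fD] c2 by simp
    have EgC: "E g g \<le> 1 / C"
    proof -
      have "E f f / v \<le> 1 / C" using fbig v Cpos unfolding v_def[symmetric]
        by (simp add: divide_simps) (simp add: mult.commute)
      then show ?thesis using Eg by simp
    qed
    have Eg0: "E g g \<ge> 0" using sdf_nonneg[OF S gD] .
    have "C1 * E g g \<le> C1 * (1 / C)" using mult_left_mono[OF EgC, of C1] C1 by linarith
    also have "C1 * (1 / C) \<le> 1/2" using C2C1 Cpos by (simp add: divide_simps)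
    finally have C1E: "C1 * E g g \<le> 1/2" .
    have "1 \<le> C1 * E g g + C2 * (\<integral>x. \<bar>g x\<bar> \<partial>M)\<^sup>2" using def gD g2 by fastforce
    then have "1/2 \<le> C2 * (\<integral>x. \<bar>g x\<bar> \<partial>M)\<^sup>2" using C1E by linarith
    then have "a0\<^sup>2 \<le> (\<integral>x. \<bar>g x\<bar> \<partial>M)\<^sup>2" unfolding a0_def using C2
      by (simp add: divide_simps mult.commute)
    moreover have "0 \<le> (\<integral>x. \<bar>g x\<bar> \<partial>M)" by simp
    ultimately have absg: "a0 \<le> (\<integral>x. \<bar>g x\<bar> \<partial>M)" using a0
      by (meson abs_le_square_iff abs_of_nonneg le_less_trans not_le power2_le_imp_le)
    have gsq: "sq_int M g" using sdf_sq[OF S gD] .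
    have gi: "integrable M g" using sq_int_integrable[OF P gsq] .
    have gp: "integrable M (\<lambda>x. max 0 (g x))" using integrable_max[OF integrable_zero gi] by simp
    have gn: "integrable M (\<lambda>x. max 0 (-1 * g x))"
      using integrable_max[OF integrable_zero integrable_mult_right[OF gi, of "-1"]] by simp
    have "(\<lambda>x. \<bar>g x\<bar>) = (\<lambda>x. max 0 (g x) + max 0 (-1 * g x))" by (auto simp: abs_if max_def)
    then have "(\<integral>x. \<bar>g x\<bar> \<partial>M) = (\<integral>x. max 0 (g x) \<partial>M) + (\<integral>x. max 0 (-1 * g x) \<partial>M)"
      using gp gn by simp
    then have cases: "a \<le> (\<integral>x. max 0 (g x) \<partial>M) \<or> a \<le> (\<integral>x. max 0 (-1 * g x) \<partial>M)"
      using absg unfolding a_def by linarith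
    have "\<exists>h\<in>D. E h h = E g g \<and> (\<integral>x. (h x)\<^sup>2 \<partial>M) = 1 \<and> a \<le> (\<integral>x. max 0 (h x) \<partial>M)"
    proof (cases "a \<le> (\<integral>x. max 0 (g x) \<partial>M)")
      case True then show ?thesis using gD g2 by blast
    next
      case False
      then have A: "a \<le> (\<integral>x. max 0 (-1 * g x) \<partial>M)" using cases by blast
      have hD: "(\<lambda>x. -1 * g x) \<in> D" using sdf_scale[OF S gD] .
      have "E (\<lambda>x. -1 * g x) (\<lambda>x. -1 * g x) = E g g" using sdf_Escale2[OF S gD, of "-1"] by simp
      moreover have "(\<integral>x. (-1 * g x)\<^sup>2 \<partial>M) = 1" using g2 by simp
      ultimately show ?thesis using hD A by blast
    qed
    then obtain h where hD: "h \<in> D" and Eh: "E h h = E g g" and h2: "(\<integral>x. (h x)\<^sup>2 \<partial>M) = 1"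
      and hp: "a \<le> (\<integral>x. max 0 (h x) \<partial>M)" by blast
    obtain u where uD: "u \<in> D" and uE: "E u u \<le> (a/2)\<^sup>2 * E h h"
      and ui: "a\<^sup>2/4 \<le> (\<integral>x. u x \<partial>M)" and u2: "(\<integral>x. (u x)\<^sup>2 \<partial>M) \<le> 1"
      using trunc[OF P S hD a hp] h2 by auto
    have "(a/2)\<^sup>2 * E h h \<le> (a/2)\<^sup>2 * (1 / C)" using Eh mult_left_mono[OF EgC, of "(a/2)\<^sup>2"] by simp
    also have "(a/2)\<^sup>2 * (1 / C) \<le> \<epsilon>" using Ceps Cpos eps
      by (simp add: divide_simps mult.commute) (simp add: algebra_simps)
    finally show "\<exists>u\<in>D. E u u \<le> \<epsilon> \<and> a\<^sup>2/4 \<le> (\<integral>x. u x \<partial>M) \<and> (\<integral>x. (u x)\<^sup>2 \<partial>M) \<le> 1"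
      using uD uE ui u2 by force
  qed
  then show ?thesis using a by (intro exI[of _ "a\<^sup>2/4"]) auto
qed

lemma lin_aux: "(x::real) \<le> 2*(p - q) + t \<Longrightarrow> t < e/2 \<Longrightarrow> \<bar>q - p\<bar> < e/4 \<Longrightarrow> x < e"
  unfolding right_diff_distrib abs_less_iff by linarith

lemma E1_swap:
  assumes S: "symmetric_dirichlet_form M D E" and a: "a \<in> D" and b: "b \<in> D"
  shows "E1 M E (\<lambda>x. a x - b x) = E1 M E (\<lambda>x. b x - a x)"
proof -
  have "E (\<lambda>x. a x - b x) (\<lambda>x. a x - b x) = E (\<lambda>x. b x - a x) (\<lambda>x. b x - a x)"
    using sdf_Ediff(1)[OF S a b] sdf_Ediff(1)[OF S b a] sdf_sym[OF S a b] by simp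
  moreover have "(\<lambda>x. (a x - b x)\<^sup>2) = (\<lambda>x. (b x - a x)\<^sup>2)" by (simp add: power2_commute)
  ultimately show ?thesis unfolding E1_def by simp
qed

lemma step2:
  assumes P: "prob_space M" and S: "symmetric_dirichlet_form M D E"
    and irr: "irreducible_form M D E" and d0: "\<delta> > 0"
    and ex: "\<forall>\<epsilon>>0. \<exists>u\<in>D. E u u \<le> \<epsilon> \<and> \<delta> \<le> (\<integral>x. u x \<partial>M) \<and> (\<integral>x. (u x)\<^sup>2 \<partial>M) \<le> 1"
  shows False
proof -
  interpret prob_space M by (rule P)
  define K where "K n = {h\<in>D. E h h \<le> 1 / real (Suc n) \<and> \<delta> \<le> (\<integral>x. h x \<partial>M) \<and> (\<integral>x. (h x)\<^sup>2 \<partial>M) \<le> 1}" for n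
  define Q where "Q h = (\<integral>x. (h x)\<^sup>2 \<partial>M)" for h :: "'a \<Rightarrow> real"
  define d where "d n = Inf (Q ` K n)" for n
  have Kne: "K n \<noteq> {}" for n
  proof -
    obtain u where "u \<in> D" "E u u \<le> 1 / real (Suc n)" "\<delta> \<le> (\<integral>x. u x \<partial>M)" "(\<integral>x. (u x)\<^sup>2 \<partial>M) \<le> 1"
      using ex[rule_format, of "1 / real (Suc n)"] by auto
    then have "u \<in> K n" unfolding K_def by blast
    then show ?thesis by blast
  qed
  have Kmono: "K m \<subseteq> K n" if "n \<le> m" for n m
  proof -
    have "1 / real (Suc m) \<le> 1 / real (Suc n)" using that by (simp add: frac_le)
    then show ?thesis unfolding K_def by auto
  qed
  have Q0: "Q h \<ge> 0" for h unfolding Q_def by simp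
  have bdd: "bdd_below (Q ` K n)" for n by (rule bdd_belowI[of _ 0]) (use Q0 in auto)
  have dle: "d n \<le> Q h" if "h \<in> K n" for n h
    unfolding d_def using bdd that by (simp add: cInf_lower)
  have dge: "0 \<le> d n" for n unfolding d_def using Kne Q0 by (intro cInf_greatest) auto
  have dle1: "d n \<le> 1" for n
  proof -
    obtain h where "h \<in> K n" using Kne by blast
    then show ?thesis using dle[of h n] unfolding K_def Q_def by auto
  qed
  have dmono: "d n \<le> d m" if "n \<le> m" for n m
    unfolding d_def using Kne bdd Kmono[OF that]
    by (intro cInf_superset_mono) auto
  have inc: "incseq d" using dmono by (simp add: incseq_def)
  have "d \<longlonglongrightarrow> (SUP n. d n)"
    by (rule LIMSEQ_incseq_SUP) (use dle1 inc in \<open>auto intro!: bdd_aboveI[of _ 1]\<close>)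
  then have dC: "Cauchy d" by (rule LIMSEQ_imp_Cauchy)
  have ex_h: "\<forall>n. \<exists>h. h \<in> K n \<and> Q h < d n + 1 / real (Suc n)"
  proof
    fix n
    have "Inf (Q ` K n) < d n + 1 / real (Suc n)" unfolding d_def by simp
    moreover have "Q ` K n \<noteq> {}" using Kne by simp
    ultimately have "\<exists>q\<in>Q ` K n. q < d n + 1 / real (Suc n)"
      unfolding d_def by (intro cInf_lessD) auto
    then obtain q where q1: "q \<in> Q ` K n" and q2: "q < d n + 1 / real (Suc n)"
      by blast
    from q1 obtain h where "h \<in> K n" "q = Q h" by blast
    then show "\<exists>h. h \<in> K n \<and> Q h < d n + 1 / real (Suc n)" using q2 by blast
  qed
  obtain h where hh: "\<forall>n. h n \<in> K n \<and> Q (h n) < d n + 1 / real (Suc n)"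
    using choice[OF ex_h] by blast
  have hK: "h n \<in> K n" for n using hh by blast
  have hQ: "Q (h n) < d n + 1 / real (Suc n)" for n using hh by blast
  have Kfacts: "h' \<in> D" "E h' h' \<le> 1 / real (Suc n)" "\<delta> \<le> (\<integral>x. h' x \<partial>M)" "Q h' \<le> 1"
    if "h' \<in> K n" for h' n using that unfolding K_def Q_def mem_Collect_eq by blast+
  have sqi: "integrable M (\<lambda>x. (h' x)\<^sup>2)" "integrable M h'" if "h' \<in> D" for h'
  proof -
    have q: "sq_int M h'" using sdf_sq[OF S that] .
    show "integrable M (\<lambda>x. (h' x)\<^sup>2)" using q unfolding sq_int_def by blast
    show "integrable M h'" using sq_int_integrable[OF P q] .
  qed
  have mid: "(\<lambda>x. (1/2) * a x + (1/2) * b x) \<in> K n" if a: "a \<in> K n" and b: "b \<in> K n" for a b n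
  proof -
    let ?m = "\<lambda>x. (1/2) * a x + (1/2) * b x"
    have aD: "a \<in> D" and bD: "b \<in> D" using Kfacts a b by auto
    have mD: "?m \<in> D" using sdf_lin[OF S aD bD] .
    have "E ?m ?m \<le> (E a a + E b b) / 2" using sdf_Emid[OF S aD bD] .
    also have "\<dots> \<le> 1 / real (Suc n)" using Kfacts(2)[OF a] Kfacts(2)[OF b] by simp
    finally have mE: "E ?m ?m \<le> 1 / real (Suc n)" .
    have "(\<integral>x. ?m x \<partial>M) = (1/2) * (\<integral>x. a x \<partial>M) + (1/2) * (\<integral>x. b x \<partial>M)"
      using sqi(2)[OF aD] sqi(2)[OF bD] by simp
    then have mI: "\<delta> \<le> (\<integral>x. ?m x \<partial>M)" using Kfacts(3)[OF a] Kfacts(3)[OF b] by simp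
    have "(\<integral>x. (?m x)\<^sup>2 \<partial>M) \<le> (\<integral>x. (1/2) * (a x)\<^sup>2 + (1/2) * (b x)\<^sup>2 \<partial>M)"
    proof (rule integral_mono)
      show "integrable M (\<lambda>x. (?m x)\<^sup>2)" using sqi(1)[OF mD] .
      show "integrable M (\<lambda>x. (1/2) * (a x)\<^sup>2 + (1/2) * (b x)\<^sup>2)"
        using sqi(1)[OF aD] sqi(1)[OF bD] by simp
      fix x
      have "0 \<le> (a x - b x)\<^sup>2" by simp
      then show "(?m x)\<^sup>2 \<le> (1/2) * (a x)\<^sup>2 + (1/2) * (b x)\<^sup>2"
        by (simp add: power2_eq_square algebra_simps)
    qed
    also have "\<dots> = (1/2) * Q a + (1/2) * Q b"
      using sqi(1)[OF aD] sqi(1)[OF bD] unfolding Q_def by simp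
    also have "\<dots> \<le> 1" using Kfacts(4)[OF a] Kfacts(4)[OF b] by simp
    finally show ?thesis using mD mE mI unfolding K_def by blast
  qed
  have hD: "h n \<in> D" for n using Kfacts(1)[OF hK] .
  have bound: "E1 M E (\<lambda>x. h n x - h m x) \<le> 2 * (d m - d n) + 8 / real (Suc n)"
    if nm: "n \<le> m" for n m
  proof -
    let ?a = "h n" and ?b = "h m"
    let ?m = "\<lambda>x. (1/2) * h n x + (1/2) * h m x"
    have aK: "?a \<in> K n" using hK .
    have bK: "?b \<in> K n" using hK Kmono[OF nm] by blast
    have aD: "?a \<in> D" and bD: "?b \<in> D" using hD by auto
    have mD: "?m \<in> D" using sdf_lin[OF S aD bD] .
    have mK: "d n \<le> Q ?m" using dle[OF mid[OF aK bK]] .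
    have eq: "(\<lambda>x. (h n x - h m x)\<^sup>2) = (\<lambda>x. 2 * (h n x)\<^sup>2 + 2 * (h m x)\<^sup>2 - 4 * (?m x)\<^sup>2)"
      by (rule ext) (simp add: power2_eq_square algebra_simps)
    have "(\<integral>x. (h n x - h m x)\<^sup>2 \<partial>M) = 2 * Q ?a + 2 * Q ?b - 4 * Q ?m"
      unfolding eq Q_def using sqi(1)[OF aD] sqi(1)[OF bD] sqi(1)[OF mD] by simp
    also have "\<dots> \<le> 2 * (d n + 1 / real (Suc n)) + 2 * (d m + 1 / real (Suc m)) - 4 * d n"
    proof -
      have X: "\<And>A B Cm. A < d n + 1 / real (Suc n) \<Longrightarrow> B < d m + 1 / real (Suc m) \<Longrightarrow> d n \<le> Cm \<Longrightarrow>
          2 * A + 2 * B - 4 * Cm \<le> 2 * (d n + 1 / real (Suc n)) + 2 * (d m + 1 / real (Suc m)) - 4 * d n"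
        by (smt (verit))
      show ?thesis by (rule X[OF hQ[of n] hQ[of m] mK])
    qed
    also have "\<dots> \<le> 2 * (d m - d n) + 4 / real (Suc n)"
    proof -
      have "1 / real (Suc m) \<le> 1 / real (Suc n)" using nm by (simp add: frac_le)
      then show ?thesis by simp
    qed
    finally have I: "(\<integral>x. (h n x - h m x)\<^sup>2 \<partial>M) \<le> 2 * (d m - d n) + 4 / real (Suc n)" .
    have "E (\<lambda>x. h n x - h m x) (\<lambda>x. h n x - h m x) \<le> 2 * E ?a ?a + 2 * E ?b ?b"
      using sdf_Ediff_le[OF S aD bD] .
    also have "\<dots> \<le> 4 / real (Suc n)" using Kfacts(2)[OF aK] Kfacts(2)[OF bK] by simp
    finally show ?thesis using I unfolding E1_def by simp
  qed
  have cauchy: "\<forall>e>0. \<exists>N. \<forall>m\<ge>N. \<forall>n\<ge>N. E1 M E (\<lambda>x. h m x - h n x) < e"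
  proof (intro allI impI)
    fix e :: real assume e: "e > 0"
    obtain N1 where N1: "\<And>m n. m \<ge> N1 \<Longrightarrow> n \<ge> N1 \<Longrightarrow> norm (d m - d n) < e / 4"
      using CauchyD[OF dC, of "e/4"] e by auto
    obtain N2 :: nat where N2: "16 / e < real N2" using reals_Archimedean2 by blast
    have N2': "8 / real (Suc n) < e / 2" if "n \<ge> N2" for n
    proof -
      have "16 / e < real (Suc n)" using N2 that by linarith
      then have "16 < e * real (Suc n)" using e by (simp add: divide_simps mult.commute)
      then show ?thesis using e by (simp add: divide_simps)
    qed
    show "\<exists>N. \<forall>m\<ge>N. \<forall>n\<ge>N. E1 M E (\<lambda>x. h m x - h n x) < e"
    proof (intro exI[of _ "max N1 N2"] allI impI)
      fix m n assume m: "max N1 N2 \<le> m" and n: "max N1 N2 \<le> n"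
      have dd0: "norm (d m - d n) < e / 4" using N1 m n by auto
      then have dd: "\<bar>d m - d n\<bar> < e / 4" by simp
      then have dd': "\<bar>d n - d m\<bar> < e / 4" by (simp add: abs_minus_commute)
      show "E1 M E (\<lambda>x. h m x - h n x) < e"
      proof (cases "m \<le> n")
        case True
        have "E1 M E (\<lambda>x. h m x - h n x) \<le> 2 * (d n - d m) + 8 / real (Suc m)" using bound[OF True] .
        moreover have "8 / real (Suc m) < e / 2" using N2' m by auto
        ultimately show ?thesis by (rule lin_aux[OF _ _ dd])
      next
        case False
        then have nm: "n \<le> m" by simp
        have "E1 M E (\<lambda>x. h m x - h n x) = E1 M E (\<lambda>x. h n x - h m x)" using E1_swap[OF S hD hD] .
        also have "\<dots> \<le> 2 * (d m - d n) + 8 / real (Suc n)" using bound[OF nm] .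
        finally have "E1 M E (\<lambda>x. h m x - h n x) \<le> 2 * (d m - d n) + 8 / real (Suc n)" .
        moreover have "8 / real (Suc n) < e / 2" using N2' n by auto
        ultimately show ?thesis by (rule lin_aux[OF _ _ dd'])
      qed
    qed
  qed
  obtain f where fD: "f \<in> D" and lim: "(\<lambda>n. E1 M E (\<lambda>x. h n x - f x)) \<longlonglongrightarrow> 0"
    using sdf_closed[OF S _ cauchy] hD by blast
  have E1ge: "E (\<lambda>x. h n x - f x) (\<lambda>x. h n x - f x) \<le> E1 M E (\<lambda>x. h n x - f x)"
    and Ige: "(\<integral>x. (h n x - f x)\<^sup>2 \<partial>M) \<le> E1 M E (\<lambda>x. h n x - f x)" for n
  proof -
    have dD: "(\<lambda>x. h n x - f x) \<in> D" using sdf_Ediff(2)[OF S hD fD] .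
    show "E (\<lambda>x. h n x - f x) (\<lambda>x. h n x - f x) \<le> E1 M E (\<lambda>x. h n x - f x)"
      unfolding E1_def by simp
    show "(\<integral>x. (h n x - f x)\<^sup>2 \<partial>M) \<le> E1 M E (\<lambda>x. h n x - f x)"
      unfolding E1_def using sdf_nonneg[OF S dD] by simp
  qed
  have Ef_bound: "E f f \<le> 2 * (1 / real (Suc n)) + 2 * E1 M E (\<lambda>x. h n x - f x)" for n
  proof -
    have dD: "(\<lambda>x. h n x - f x) \<in> D" using sdf_Ediff(2)[OF S hD fD] .
    have ff: "(\<lambda>x. h n x - (h n x - f x)) = f" by simp
    have "E f f \<le> 2 * E (h n) (h n) + 2 * E (\<lambda>x. h n x - f x) (\<lambda>x. h n x - f x)"
      using sdf_Ediff_le[OF S hD dD, of n] unfolding ff .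
    moreover have "E (h n) (h n) \<le> 1 / real (Suc n)" using Kfacts(2)[OF hK] .
    ultimately show ?thesis using E1ge[of n] by simp
  qed
  have lim2: "(\<lambda>n. 2 * (1 / real (Suc n)) + 2 * E1 M E (\<lambda>x. h n x - f x)) \<longlonglongrightarrow> 2 * 0 + 2 * 0"
    by (intro tendsto_intros lim LIMSEQ_Suc[OF lim_1_over_n])
  have "E f f \<le> 2 * 0 + 2 * 0"
    by (rule LIMSEQ_le_const[OF lim2]) (use Ef_bound in blast)
  then have "E f f \<le> 0" by simp
  then have Ef0: "E f f = 0" using sdf_nonneg[OF S fD] by simp
  then have fae: "AE x in M. f x = 0" using irr fD unfolding irreducible_form_def by blast
  have fm: "f \<in> borel_measurable M" using sdf_sq[OF S fD] unfolding sq_int_def by blast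
  have lowb: "\<delta>\<^sup>2 \<le> E1 M E (\<lambda>x. h n x - f x)" for n
  proof -
    have hm: "h n \<in> borel_measurable M" using sdf_sq[OF S hD] unfolding sq_int_def by blast
    have "\<delta>\<^sup>2 \<le> (\<integral>x. h n x \<partial>M)\<^sup>2"
      using Kfacts(3)[OF hK] d0 by (intro power_mono) auto
    also have "\<dots> \<le> (\<integral>x. (h n x)\<^sup>2 \<partial>M)" using sq_int_cs[OF P sdf_sq[OF S hD]] .
    also have "\<dots> = (\<integral>x. (h n x - f x)\<^sup>2 \<partial>M)"
      by (rule integral_cong_AE) (use fae hm fm in auto)
    also have "\<dots> \<le> E1 M E (\<lambda>x. h n x - f x)" using Ige .
    finally show ?thesis .
  qed
  have "\<delta>\<^sup>2 \<le> 0" by (rule LIMSEQ_le_const[OF lim]) (use lowb in auto)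
  then show False using d0 by (simp add: not_le)
qed

theorem theorem4p1:
  fixes M :: "'a measure" and D :: "('a \<Rightarrow> real) set"
    and E :: "('a \<Rightarrow> real) \<Rightarrow> ('a \<Rightarrow> real) \<Rightarrow> real"
  assumes "prob_space M"
    and "symmetric_dirichlet_form M D E"
    and "non_conservative M D E"
    and "irreducible_form M D E"
  shows "(\<exists>C>0. \<forall>f\<in>D. (\<integral>x. (f x)\<^sup>2 \<partial>M) \<le> C * E f f) \<longleftrightarrow>
         (\<exists>C1>0. \<exists>C2>0. \<forall>f\<in>D.
            (\<integral>x. (f x)\<^sup>2 \<partial>M) \<le> C1 * E f f + C2 * (\<integral>x. \<bar>f x\<bar> \<partial>M)\<^sup>2)"
proof
  assume "\<exists>C>0. \<forall>f\<in>D. (\<integral>x. (f x)\<^sup>2 \<partial>M) \<le> C * E f f"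
  then obtain C where C: "C > 0" and H: "\<forall>f\<in>D. (\<integral>x. (f x)\<^sup>2 \<partial>M) \<le> C * E f f" by blast
  have "\<forall>f\<in>D. (\<integral>x. (f x)\<^sup>2 \<partial>M) \<le> C * E f f + 1 * (\<integral>x. \<bar>f x\<bar> \<partial>M)\<^sup>2"
  proof
    fix f assume "f \<in> D"
    then have "(\<integral>x. (f x)\<^sup>2 \<partial>M) \<le> C * E f f" using H by blast
    moreover have "0 \<le> (\<integral>x. \<bar>f x\<bar> \<partial>M)\<^sup>2" by simp
    ultimately show "(\<integral>x. (f x)\<^sup>2 \<partial>M) \<le> C * E f f + 1 * (\<integral>x. \<bar>f x\<bar> \<partial>M)\<^sup>2" by linarith
  qed
  then show "\<exists>C1>0. \<exists>C2>0. \<forall>f\<in>D.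
            (\<integral>x. (f x)\<^sup>2 \<partial>M) \<le> C1 * E f f + C2 * (\<integral>x. \<bar>f x\<bar> \<partial>M)\<^sup>2"
    using C by (intro exI[of _ C] conjI exI[of _ "1::real"]) (simp_all only: zero_less_one)
next
  assume "\<exists>C1>0. \<exists>C2>0. \<forall>f\<in>D.
            (\<integral>x. (f x)\<^sup>2 \<partial>M) \<le> C1 * E f f + C2 * (\<integral>x. \<bar>f x\<bar> \<partial>M)\<^sup>2"
  then obtain C1 C2 where C1: "C1 > 0" and C2: "C2 > 0"
    and def: "\<forall>f\<in>D. (\<integral>x. (f x)\<^sup>2 \<partial>M) \<le> C1 * E f f + C2 * (\<integral>x. \<bar>f x\<bar> \<partial>M)\<^sup>2" by blast
  show "\<exists>C>0. \<forall>f\<in>D. (\<integral>x. (f x)\<^sup>2 \<partial>M) \<le> C * E f f"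
  proof (rule ccontr)
    assume np: "\<not> (\<exists>C>0. \<forall>f\<in>D. (\<integral>x. (f x)\<^sup>2 \<partial>M) \<le> C * E f f)"
    obtain \<delta> where d: "\<delta> > 0"
      and ex: "\<forall>\<epsilon>>0. \<exists>u\<in>D. E u u \<le> \<epsilon> \<and> \<delta> \<le> (\<integral>x. u x \<partial>M) \<and> (\<integral>x. (u x)\<^sup>2 \<partial>M) \<le> 1"
      using step1[OF assms(1) assms(2) C1 C2 def np] by blast
    show False by (rule step2[OF assms(1) assms(2) assms(4) d ex])
  qed
qed

end
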